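(* Let $p_0:=1$ and, for $N\ge1$, $p_N:=\mathbb P\big(\bigcap_{j=1}^N\{\max(Y_{j-1},Y_j)\ge\max(Y_{j,0},Y_{j,1})\}\big)$, where $Y_0,Y_1,\dots,Y_N,Y_{1,0},Y_{1,1},\dots,Y_{N,0},Y_{N,1}$ are i.i.d. with a continuous distribution. Then for all $N\ge1$, $$p_N=\frac1{3N+1}\Big(2p_{N-1}+\sum_{j=2}^N p_{j-2}\,p_{N-j}\Big),$$ and the generating function $f(z)=\sum_{N\ge0}p_Nz^N$ (analytic near $0$) satisfies $f+3zf'=1+2zf+z^2f^2$.
   Context: All random variables are independent with the same continuous distribution; $p_N$ does not depend on which continuous distribution is used. *)

theory Defs
  imports "HOL-Probability.Probability"
begin

text \<open>Index set of the random variables: Inl j stands for Y_j (0 \<le> j \<le> N),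
  Inr (j,i) stands for Y_{j,i} (1 \<le> j \<le> N, i \<in> {0,1}).\<close>
definition idx :: "nat \<Rightarrow> (nat + nat \<times> nat) set" where
  "idx N = Inl ` {0..N} \<union> Inr ` ({1..N} \<times> {0,1})"

definition jointM :: "real measure \<Rightarrow> nat \<Rightarrow> ((nat + nat \<times> nat) \<Rightarrow> real) measure" where
  "jointM M N = PiM (idx N) (\<lambda>_. M)"

definition event :: "real measure \<Rightarrow> nat \<Rightarrow> ((nat + nat \<times> nat) \<Rightarrow> real) set" where
  "event M N = {\<omega> \<in> space (jointM M N).
     \<forall>j\<in>{1..N}. max (\<omega> (Inr (j,0))) (\<omega> (Inr (j,1))) \<le> max (\<omega> (Inl (j-1))) (\<omega> (Inl j))}"

definition pN :: "real measure \<Rightarrow> nat \<Rightarrow> real" where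
  "pN M N = (if N = 0 then 1 else measure (jointM M N) (event M N))"

definition gf :: "real measure \<Rightarrow> complex \<Rightarrow> complex" where
  "gf M z = (\<Sum>N. complex_of_real (pN M N) * z ^ N)"

end

theory Submission
  imports Defs "HOL-Analysis.FPS_Convergence"
begin


definition C :: "nat \<Rightarrow> nat \<Rightarrow> (nat + nat \<times> nat) set" where
  "C l r = Inl ` {l..r} \<union> Inr ` ({Suc l..r} \<times> {0,1})"

definition E :: "nat \<Rightarrow> nat \<Rightarrow> ((nat + nat \<times> nat) \<Rightarrow> real) \<Rightarrow> bool" where
  "E l r \<omega> \<longleftrightarrow> (\<forall>j\<in>{Suc l..r}. max (\<omega> (Inr (j,0))) (\<omega> (Inr (j,1))) \<le> max (\<omega> (Inl (j-1))) (\<omega> (Inl j)))"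

lemma finite_C[simp]: "finite (C l r)" by (simp add: C_def)

lemma Inl_C[simp]: "Inl k \<in> C l r \<longleftrightarrow> l \<le> k \<and> k \<le> r" by (auto simp: C_def)
lemma Inr_C[simp]: "Inr (j,i) \<in> C l r \<longleftrightarrow> Suc l \<le> j \<and> j \<le> r \<and> (i = 0 \<or> i = 1)" by (auto simp: C_def)

lemma E_local:
  assumes H: "\<forall>i\<in>C l r. \<omega> i = \<omega>' i" shows "E l r \<omega> = E l r \<omega>'"
  unfolding E_def
proof (intro ball_cong refl)
  fix j assume "j \<in> {Suc l..r}"
  then have m: "Inr (j,0) \<in> C l r" "Inr (j,1) \<in> C l r" "Inl (j-1) \<in> C l r" "Inl j \<in> C l r"
    by auto
  then have "\<omega> (Inr (j,0)) = \<omega>' (Inr (j,0))" "\<omega> (Inr (j,1)) = \<omega>' (Inr (j,1))"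
    "\<omega> (Inl (j-1)) = \<omega>' (Inl (j-1))" "\<omega> (Inl j) = \<omega>' (Inl j)"
    using H by blast+
  then show "(max (\<omega> (Inr (j,0))) (\<omega> (Inr (j,1))) \<le> max (\<omega> (Inl (j-1))) (\<omega> (Inl j))) =
    (max (\<omega>' (Inr (j,0))) (\<omega>' (Inr (j,1))) \<le> max (\<omega>' (Inl (j-1))) (\<omega>' (Inl j)))" by simp
qed

lemma E_interior:
  assumes lk: "l < k" "k < r" and lt: "\<forall>b\<in>C l r - {Inl k}. x b < y"
  shows "E l r (x(Inl k := y)) \<longleftrightarrow> E l (k-1) x \<and> E (Suc k) r x"
proof
  assume H: "E l r (x(Inl k := y))"
  show "E l (k-1) x \<and> E (Suc k) r x"
    unfolding E_def
  proof (intro conjI ballI)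
    fix j assume j: "j \<in> {Suc l..k-1}"
    then have "j \<in> {Suc l..r}" "j \<noteq> k" "j - 1 \<noteq> k" using lk by auto
    then show "max (x (Inr (j,0))) (x (Inr (j,1))) \<le> max (x (Inl (j-1))) (x (Inl j))"
      using H unfolding E_def by (metis (no_types, lifting) fun_upd_other old.sum.distinct(2) sum.inject(1))
  next
    fix j assume j: "j \<in> {Suc (Suc k)..r}"
    then have "j \<in> {Suc l..r}" "j \<noteq> k" "j - 1 \<noteq> k" using lk by auto
    then show "max (x (Inr (j,0))) (x (Inr (j,1))) \<le> max (x (Inl (j-1))) (x (Inl j))"
      using H unfolding E_def by (metis (no_types, lifting) fun_upd_other old.sum.distinct(2) sum.inject(1))
  qed
next
  assume H: "E l (k-1) x \<and> E (Suc k) r x"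
  show "E l r (x(Inl k := y))"
    unfolding E_def
  proof (intro ballI)
    fix j assume j: "j \<in> {Suc l..r}"
    consider "j < k" | "j = k" | "j = Suc k" | "Suc k < j" by linarith
    then show "max ((x(Inl k := y)) (Inr (j,0))) ((x(Inl k := y)) (Inr (j,1)))
        \<le> max ((x(Inl k := y)) (Inl (j-1))) ((x(Inl k := y)) (Inl j))"
    proof cases
      case 1
      then have "j \<in> {Suc l..k-1}" "j - 1 \<noteq> k" using j by auto
      then show ?thesis using H 1 unfolding E_def by auto
    next
      case 2
      have "x (Inr (k,0)) < y" "x (Inr (k,1)) < y" using lt lk by auto
      then show ?thesis using 2 lk by auto
    next
      case 3
      have "x (Inr (Suc k,0)) < y" "x (Inr (Suc k,1)) < y" using lt lk by auto
      then show ?thesis using 3 lk by auto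
    next
      case 4
      then have "j \<in> {Suc (Suc k)..r}" "j - 1 \<noteq> k" using j by auto
      then show ?thesis using H 4 unfolding E_def by auto
    qed
  qed
qed

lemma E_left:
  assumes lk: "l < r" and lt: "\<forall>b\<in>C l r - {Inl l}. x b < y"
  shows "E l r (x(Inl l := y)) \<longleftrightarrow> E (Suc l) r x"
proof
  assume H: "E l r (x(Inl l := y))"
  show "E (Suc l) r x"
    unfolding E_def
  proof (intro ballI)
    fix j assume j: "j \<in> {Suc (Suc l)..r}"
    then have "j \<in> {Suc l..r}" "j \<noteq> l" "j - 1 \<noteq> l" using lk by auto
    then show "max (x (Inr (j,0))) (x (Inr (j,1))) \<le> max (x (Inl (j-1))) (x (Inl j))"
      using H unfolding E_def by (metis (no_types, lifting) fun_upd_other old.sum.distinct(2) sum.inject(1))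
  qed
next
  assume H: "E (Suc l) r x"
  show "E l r (x(Inl l := y))"
    unfolding E_def
  proof (intro ballI)
    fix j assume j: "j \<in> {Suc l..r}"
    consider "j = Suc l" | "Suc l < j" using j by fastforce
    then show "max ((x(Inl l := y)) (Inr (j,0))) ((x(Inl l := y)) (Inr (j,1)))
        \<le> max ((x(Inl l := y)) (Inl (j-1))) ((x(Inl l := y)) (Inl j))"
    proof cases
      case 1
      have "x (Inr (Suc l,0)) < y" "x (Inr (Suc l,1)) < y" using lt lk by auto
      then show ?thesis using 1 lk by auto
    next
      case 2
      then have "j \<in> {Suc (Suc l)..r}" "j - 1 \<noteq> l" "j \<noteq> l" using j by auto
      then show ?thesis using H 2 unfolding E_def by auto
    qed
  qed
qed

lemma E_right:
  assumes lk: "l < r" and lt: "\<forall>b\<in>C l r - {Inl r}. x b < y"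
  shows "E l r (x(Inl r := y)) \<longleftrightarrow> E l (r-1) x"
proof
  assume H: "E l r (x(Inl r := y))"
  show "E l (r-1) x"
    unfolding E_def
  proof (intro ballI)
    fix j assume j: "j \<in> {Suc l..r-1}"
    then have "j \<in> {Suc l..r}" "j \<noteq> r" "j - 1 \<noteq> r" using lk by auto
    then show "max (x (Inr (j,0))) (x (Inr (j,1))) \<le> max (x (Inl (j-1))) (x (Inl j))"
      using H unfolding E_def by (metis (no_types, lifting) fun_upd_other old.sum.distinct(2) sum.inject(1))
  qed
next
  assume H: "E l (r-1) x"
  show "E l r (x(Inl r := y))"
    unfolding E_def
  proof (intro ballI)
    fix j assume j: "j \<in> {Suc l..r}"
    consider "j = r" | "j < r" using j by fastforce
    then show "max ((x(Inl r := y)) (Inr (j,0))) ((x(Inl r := y)) (Inr (j,1)))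
        \<le> max ((x(Inl r := y)) (Inl (j-1))) ((x(Inl r := y)) (Inl j))"
    proof cases
      case 1
      have "x (Inr (r,0)) < y" "x (Inr (r,1)) < y" using lt lk by auto
      then show ?thesis using 1 lk by auto
    next
      case 2
      then have "j \<in> {Suc l..r-1}" "j - 1 \<noteq> r" "j \<noteq> r" using j by auto
      then show ?thesis using H 2 unfolding E_def by auto
    qed
  qed
qed

lemma E_Inr:
  assumes j: "Suc l \<le> j" "j \<le> r" "i = 0 \<or> i = 1" and lt: "\<forall>b\<in>C l r - {Inr (j,i)}. x b < y"
  shows "\<not> E l r (x(Inr (j,i) := y))"
proof
  assume H: "E l r (x(Inr (j,i) := y))"
  have "Inl (j-1) \<in> C l r - {Inr (j,i)}" "Inl j \<in> C l r - {Inr (j,i)}" using j by auto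
  then have "x (Inl (j-1)) < y" "x (Inl j) < y" using lt by blast+
  moreover have "max ((x(Inr (j,i) := y)) (Inr (j,0))) ((x(Inr (j,i) := y)) (Inr (j,1)))
        \<le> max ((x(Inr (j,i) := y)) (Inl (j-1))) ((x(Inr (j,i) := y)) (Inl j))"
    using H j unfolding E_def by (meson atLeastAtMost_iff)
  ultimately show False using j(3) by (auto simp: max_def split: if_splits)
qed

lemma C_int: "l < k \<Longrightarrow> k < r \<Longrightarrow> C l r - {Inl k} = C l (k-1) \<union> (C (Suc k) r \<union> {Inr (k,0), Inr (k,1), Inr (Suc k,0), Inr (Suc k,1)})"
  apply (rule set_eqI) subgoal for z by (cases z) auto done

lemma C_left: "l < r \<Longrightarrow> C l r - {Inl l} = C (Suc l) r \<union> {Inr (Suc l,0), Inr (Suc l,1)}"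
  apply (rule set_eqI) subgoal for z by (cases z) auto done

lemma C_right: "l < r \<Longrightarrow> C l r - {Inl r} = C l (r-1) \<union> {Inr (r,0), Inr (r,1)}"
  apply (rule set_eqI) subgoal for z by (cases z) auto done

lemma C_disj_int: "l < k \<Longrightarrow> k < r \<Longrightarrow> C l (k-1) \<inter> (C (Suc k) r \<union> {Inr (k,0), Inr (k,1), Inr (Suc k,0), Inr (Suc k,1)}) = {}"
  apply (rule set_eqI) subgoal for z by (cases z) auto done

lemma C_disj_int2: "C (Suc k) r \<inter> {Inr (k,0), Inr (k,1), Inr (Suc k,0), Inr (Suc k,1)} = {}"
  by auto

lemma C_disj_left: "C (Suc l) r \<inter> {Inr (Suc l,0), Inr (Suc l,1)} = {}"
  by auto

lemma C_disj_right: "C l (r-1) \<inter> {Inr (r,0), Inr (r,1)} = {}"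
  by auto

lemma interior_reindex:
  fixes p :: "nat \<Rightarrow> real"
  shows "(\<Sum>k\<in>{l<..<l+n}. p (k-1-l) * p (l+n-Suc k)) = (\<Sum>j=2..n. p (j-2) * p (n-j))"
proof (rule sum.reindex_bij_witness[where i="\<lambda>j. l+j-1" and j="\<lambda>k. k+1-l"])
  fix a assume a: "a \<in> {l<..<l+n}"
  have "n - (a + 1 - l) = l + n - Suc a" using a by auto
  moreover have "a + 1 - l - 2 = a - 1 - l" using a by auto
  ultimately show "p (a + 1 - l - 2) * p (n - (a + 1 - l)) = p (a - 1 - l) * p (l + n - Suc a)" by simp
qed auto

lemma sum_c:
  fixes p :: "nat \<Rightarrow> real"
  assumes n: "0 < n"
  shows "(\<Sum>k\<in>{l..l+n}. (if k = l \<or> k = l+n then p (n-1) else p (k-1-l) * p (l+n-Suc k)))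
     = 2 * p (n-1) + (\<Sum>j=2..n. p (j-2) * p (n-j))"
proof -
  have e: "{l..l+n} = insert l (insert (l+n) {l<..<l+n})" using n by auto
  have "(\<Sum>k\<in>{l..l+n}. (if k = l \<or> k = l+n then p (n-1) else p (k-1-l) * p (l+n-Suc k)))
     = p (n-1) + (p (n-1) + (\<Sum>k\<in>{l<..<l+n}. (if k = l \<or> k = l+n then p (n-1) else p (k-1-l) * p (l+n-Suc k))))"
    unfolding e using n by (simp add: sum.insert)
  also have "(\<Sum>k\<in>{l<..<l+n}. (if k = l \<or> k = l+n then p (n-1) else p (k-1-l) * p (l+n-Suc k)))
     = (\<Sum>k\<in>{l<..<l+n}. p (k-1-l) * p (l+n-Suc k))"
    by (rule sum.cong) auto
  finally show ?thesis using interior_reindex[of p l n] by simp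
qed

locale cmodel =
  fixes M :: "real measure"
  assumes ps: "prob_space M" and sb: "sets M = sets borel" and nat0: "\<And>x. measure M {x} = 0"
begin

sublocale prob_space M by (rule ps)

abbreviation P :: "'i set \<Rightarrow> ('i \<Rightarrow> real) measure" where
  "P I \<equiv> PiM I (\<lambda>_. M)"

lemma PS: "product_sigma_finite (\<lambda>_::'i. M)"
  unfolding product_sigma_finite_def using ps prob_space_imp_sigma_finite by blast

lemma space_M[simp]: "space M = UNIV"
  using sets_eq_imp_space_eq[OF sb] by simp

lemma sets_M[measurable_cong]: "sets M = sets borel" by (rule sb)

lemma emeasure_single0: "emeasure M {x} = 0"
  using nat0[of x] emeasure_eq_measure by simp

lemma space_P: "space (P I) = PiE I (\<lambda>_. UNIV)"
  by (simp add: space_PiM)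

lemma box: assumes "finite J" "A \<in> sets borel"
  shows "emeasure (P J) {\<omega>\<in>space (P J). \<forall>i\<in>J. \<omega> i \<in> A} = emeasure M A ^ card J"
proof -
  have "{\<omega>\<in>space (P J). \<forall>i\<in>J. \<omega> i \<in> A} = PiE J (\<lambda>_. A)"
    by (auto simp: space_P PiE_def Pi_def)
  then show ?thesis
    using product_sigma_finite.emeasure_PiM[OF PS, of J "\<lambda>_. A"] assms sb by simp
qed

lemma measurable_upd: "(\<lambda>x. x(a:=y)) \<in> measurable (P J) (P (insert a J))"
proof -
  have "(\<lambda>x. (\<lambda>(f, y). f(a := y)) (x, y)) \<in> measurable (P J) (P (insert a J))"
    by measurable
  then show ?thesis by simp
qed

lemma slice:
  assumes fin: "finite I" and a: "a \<in> I" and A: "A \<in> sets (P I)"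
  shows "emeasure (P I) A = (\<integral>\<^sup>+y. emeasure (P (I-{a})) {x\<in>space (P (I-{a})). x(a:=y) \<in> A} \<partial>M)"
proof -
  have I: "insert a (I-{a}) = I" using a by auto
  have A': "A \<in> sets (P (insert a (I-{a})))" using A I by simp
  have "emeasure (P I) A = (\<integral>\<^sup>+\<omega>. indicator A \<omega> \<partial>P (insert a (I-{a})))"
    using A I by simp
  also have "\<dots> = (\<integral>\<^sup>+y. (\<integral>\<^sup>+x. indicator A (x(a:=y)) \<partial>P (I-{a})) \<partial>M)"
    by (rule product_sigma_finite.product_nn_integral_insert_rev[OF PS]) (use fin A' in auto)
  also have "\<dots> = (\<integral>\<^sup>+y. emeasure (P (I-{a})) {x\<in>space (P (I-{a})). x(a:=y) \<in> A} \<partial>M)"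
  proof (rule nn_integral_cong)
    fix y
    have S: "{x\<in>space (P (I-{a})). x(a:=y) \<in> A} \<in> sets (P (I-{a}))"
      using measurable_sets[OF measurable_upd A'] by (simp add: Int_def conj_commute)
    have "(\<integral>\<^sup>+x. indicator A (x(a:=y)) \<partial>P (I-{a})) = (\<integral>\<^sup>+x. indicator {x\<in>space (P (I-{a})). x(a:=y) \<in> A} x \<partial>P (I-{a}))"
      by (rule nn_integral_cong) (auto simp: indicator_def)
    also have "\<dots> = emeasure (P (I-{a})) {x\<in>space (P (I-{a})). x(a:=y) \<in> A}"
      using S by simp
    finally show "(\<integral>\<^sup>+x. indicator A (x(a:=y)) \<partial>P (I-{a})) = emeasure (P (I-{a})) {x\<in>space (P (I-{a})). x(a:=y) \<in> A}" .
  qed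
  finally show ?thesis .
qed

lemma single_coord:
  assumes "finite J" "b \<in> J" "A \<in> sets borel"
  shows "emeasure (P J) {\<omega>\<in>space (P J). \<omega> b \<in> A} = emeasure M A"
proof -
  have "{\<omega>\<in>space (P J). \<omega> b \<in> A} = PiE J (\<lambda>i. if i = b then A else UNIV)"
    using assms(2) by (auto simp: space_P PiE_def Pi_def split: if_splits)
  then have "emeasure (P J) {\<omega>\<in>space (P J). \<omega> b \<in> A} = (\<Prod>i\<in>J. emeasure M (if i = b then A else UNIV))"
    using product_sigma_finite.emeasure_PiM[OF PS, of J "\<lambda>i. if i = b then A else UNIV"] assms sb by simp
  also have "\<dots> = (\<Prod>i\<in>J. if i = b then emeasure M A else 1)"
    by (rule prod.cong) (auto simp: emeasure_space_1[simplified])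
  also have "\<dots> = emeasure M A" using assms by (simp add: prod.delta)
  finally show ?thesis .
qed

lemma ties_null:
  assumes fin: "finite I" and ab: "a \<in> I" "b \<in> I" "a \<noteq> b"
  shows "{\<omega>\<in>space (P I). \<omega> a = \<omega> b} \<in> null_sets (P I)"
proof -
  have S: "{\<omega>\<in>space (P I). \<omega> a = \<omega> b} \<in> sets (P I)"
    using ab by measurable
  have "emeasure (P I) {\<omega>\<in>space (P I). \<omega> a = \<omega> b} = (\<integral>\<^sup>+y. emeasure (P (I-{a})) {x\<in>space (P (I-{a})). x(a:=y) \<in> {\<omega>\<in>space (P I). \<omega> a = \<omega> b}} \<partial>M)"
    by (rule slice[OF fin ab(1) S])
  also have "\<dots> = (\<integral>\<^sup>+y. 0 \<partial>M)"
  proof (rule nn_integral_cong)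
    fix y
    have "{x\<in>space (P (I-{a})). x(a:=y) \<in> {\<omega>\<in>space (P I). \<omega> a = \<omega> b}} = {x\<in>space (P (I-{a})). x b \<in> {y}}"
      using ab by (auto simp: space_P PiE_def extensional_def)
    then show "emeasure (P (I-{a})) {x\<in>space (P (I-{a})). x(a:=y) \<in> {\<omega>\<in>space (P I). \<omega> a = \<omega> b}} = 0"
      using single_coord[of "I-{a}" b "{y}"] fin ab emeasure_single0 by simp
  qed
  finally show ?thesis using S by (simp add: null_sets_def)
qed

lemma decomp:
  assumes fin: "finite I" and ne: "I \<noteq> {}" and A: "A \<in> sets (P I)"
  shows "emeasure (P I) A = (\<Sum>a\<in>I. \<integral>\<^sup>+y. emeasure (P (I-{a}))
            {x\<in>space (P (I-{a})). x(a:=y) \<in> A \<and> (\<forall>b\<in>I-{a}. x b < y)} \<partial>M)"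
proof -
  define T where "T a = {\<omega>\<in>space (P I). \<forall>b\<in>I-{a}. \<omega> b < \<omega> a}" for a
  have T: "T a \<in> sets (P I)" if "a \<in> I" for a
    unfolding T_def
    apply measurable
    subgoal using fin by simp
    subgoal for b proof -
      assume "b \<in> I - {a}"
      then have "b \<in> I" by simp
      then show ?thesis using that by measurable
    qed
    done
  define N where "N = (\<Union>p\<in>{p\<in>I\<times>I. fst p \<noteq> snd p}. {\<omega>\<in>space (P I). \<omega> (fst p) = \<omega> (snd p)})"
  have N: "N \<in> null_sets (P I)"
    unfolding N_def
    by (rule null_sets_UN') (use fin in \<open>auto intro!: ties_null countable_finite\<close>)
  define U where "U = (\<Union>a\<in>I. A \<inter> T a)"
  have U: "U \<in> sets (P I)" unfolding U_def using T A fin by auto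
  have sub1: "A - N \<subseteq> U"
  proof
    fix \<omega> assume w: "\<omega> \<in> A - N"
    then have ws: "\<omega> \<in> space (P I)" using sets.sets_into_space[OF A] by auto
    define m where "m = Max (\<omega> ` I)"
    have "m \<in> \<omega> ` I" unfolding m_def using fin ne by simp
    then obtain a where a: "a \<in> I" "\<omega> a = m" by auto
    have "\<omega> b < \<omega> a" if "b \<in> I-{a}" for b
    proof -
      have "\<omega> b \<le> m" unfolding m_def using that fin by simp
      moreover have "\<omega> b \<noteq> \<omega> a"
        using w that a(1) ws unfolding N_def by force
      ultimately show ?thesis using a by simp
    qed
    then have "\<omega> \<in> T a" unfolding T_def using ws by auto
    then show "\<omega> \<in> U" unfolding U_def using a w by auto
  qed
  have sub2: "U \<subseteq> A" unfolding U_def by auto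
  have "emeasure (P I) A = emeasure (P I) (A - N)"
    using emeasure_Diff_null_set[OF N A] by simp
  also have "\<dots> \<le> emeasure (P I) U" by (rule emeasure_mono[OF sub1 U])
  finally have le1: "emeasure (P I) A \<le> emeasure (P I) U" .
  have le2: "emeasure (P I) U \<le> emeasure (P I) A" by (rule emeasure_mono[OF sub2 A])
  have eqU: "emeasure (P I) A = emeasure (P I) U" using le1 le2 by (rule antisym)
  have disj: "disjoint_family_on (\<lambda>a. A \<inter> T a) I"
    unfolding disjoint_family_on_def T_def
  proof (intro ballI impI)
    fix m n assume "m \<in> I" "n \<in> I" "m \<noteq> n"
    then show "A \<inter> {\<omega> \<in> space (P I). \<forall>b\<in>I - {m}. \<omega> b < \<omega> m} \<inter> (A \<inter> {\<omega> \<in> space (P I). \<forall>b\<in>I - {n}. \<omega> b < \<omega> n}) = {}"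
    proof (intro equalityI subsetI)
      fix x assume x: "x \<in> A \<inter> {\<omega> \<in> space (P I). \<forall>b\<in>I - {m}. \<omega> b < \<omega> m} \<inter> (A \<inter> {\<omega> \<in> space (P I). \<forall>b\<in>I - {n}. \<omega> b < \<omega> n})"
      have "x n < x m" using x \<open>n \<in> I\<close> \<open>m \<noteq> n\<close> by auto
      moreover have "x m < x n" using x \<open>m \<in> I\<close> \<open>m \<noteq> n\<close> by auto
      ultimately show "x \<in> {}" by simp
    qed simp
  qed
  have "emeasure (P I) U = (\<Sum>a\<in>I. emeasure (P I) (A \<inter> T a))"
    unfolding U_def by (rule sum_emeasure[symmetric]) (use T A disj fin in auto)
  also have "\<dots> = (\<Sum>a\<in>I. \<integral>\<^sup>+y. emeasure (P (I-{a}))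
            {x\<in>space (P (I-{a})). x(a:=y) \<in> A \<and> (\<forall>b\<in>I-{a}. x b < y)} \<partial>M)"
  proof (rule sum.cong[OF refl])
    fix a assume a: "a \<in> I"
    have "emeasure (P I) (A \<inter> T a) = (\<integral>\<^sup>+y. emeasure (P (I-{a})) {x\<in>space (P (I-{a})). x(a:=y) \<in> A \<inter> T a} \<partial>M)"
      by (rule slice[OF fin a]) (use A T a in auto)
    also have "\<dots> = (\<integral>\<^sup>+y. emeasure (P (I-{a}))
            {x\<in>space (P (I-{a})). x(a:=y) \<in> A \<and> (\<forall>b\<in>I-{a}. x b < y)} \<partial>M)"
    proof (rule nn_integral_cong)
      fix y
      have "{x\<in>space (P (I-{a})). x(a:=y) \<in> A \<inter> T a} = {x\<in>space (P (I-{a})). x(a:=y) \<in> A \<and> (\<forall>b\<in>I-{a}. x b < y)}"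
        using a by (auto simp: T_def space_P PiE_def extensional_def)
      then show "emeasure (P (I-{a})) {x\<in>space (P (I-{a})). x(a:=y) \<in> A \<inter> T a} = emeasure (P (I-{a}))
            {x\<in>space (P (I-{a})). x(a:=y) \<in> A \<and> (\<forall>b\<in>I-{a}. x b < y)}" by simp
    qed
    finally show "emeasure (P I) (A \<inter> T a) = (\<integral>\<^sup>+y. emeasure (P (I-{a}))
            {x\<in>space (P (I-{a})). x(a:=y) \<in> A \<and> (\<forall>b\<in>I-{a}. x b < y)} \<partial>M)" .
  qed
  finally show ?thesis using eqU by simp
qed

lemma indep:
  assumes fI: "finite I" and fJ: "finite J" and IJ: "I \<inter> J = {}"
    and loc1: "\<And>\<omega> \<omega>'. (\<forall>i\<in>I. \<omega> i = \<omega>' i) \<Longrightarrow> Q1 \<omega> = Q1 \<omega>'"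
    and loc2: "\<And>\<omega> \<omega>'. (\<forall>i\<in>J. \<omega> i = \<omega>' i) \<Longrightarrow> Q2 \<omega> = Q2 \<omega>'"
    and S1: "{\<omega>\<in>space (P I). Q1 \<omega>} \<in> sets (P I)"
    and S2: "{\<omega>\<in>space (P J). Q2 \<omega>} \<in> sets (P J)"
  shows "emeasure (P (I \<union> J)) {\<omega>\<in>space (P (I \<union> J)). Q1 \<omega> \<and> Q2 \<omega>}
     = emeasure (P I) {\<omega>\<in>space (P I). Q1 \<omega>} * emeasure (P J) {\<omega>\<in>space (P J). Q2 \<omega>}"
proof -
  have r1: "Q1 \<omega> = Q1 (restrict \<omega> I)" for \<omega> by (rule loc1) simp
  have r2: "Q2 \<omega> = Q2 (restrict \<omega> J)" for \<omega> by (rule loc2) simp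
  have m1: "(\<lambda>\<omega>. restrict \<omega> I) \<in> measurable (P (I \<union> J)) (P I)"
    by (rule measurable_restrict_subset) auto
  have m2: "(\<lambda>\<omega>. restrict \<omega> J) \<in> measurable (P (I \<union> J)) (P J)"
    by (rule measurable_restrict_subset) auto
  have A1: "{\<omega>\<in>space (P (I \<union> J)). Q1 \<omega>} \<in> sets (P (I \<union> J))"
  proof -
    have "{\<omega>\<in>space (P (I \<union> J)). Q1 \<omega>} = (\<lambda>\<omega>. restrict \<omega> I) -` {\<omega>\<in>space (P I). Q1 \<omega>} \<inter> space (P (I \<union> J))"
      using measurable_space[OF m1] r1 by blast
    then show ?thesis using measurable_sets[OF m1 S1] by simp
  qed
  have A2: "{\<omega>\<in>space (P (I \<union> J)). Q2 \<omega>} \<in> sets (P (I \<union> J))"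
  proof -
    have "{\<omega>\<in>space (P (I \<union> J)). Q2 \<omega>} = (\<lambda>\<omega>. restrict \<omega> J) -` {\<omega>\<in>space (P J). Q2 \<omega>} \<inter> space (P (I \<union> J))"
      using measurable_space[OF m2] r2 by blast
    then show ?thesis using measurable_sets[OF m2 S2] by simp
  qed
  have A: "{\<omega>\<in>space (P (I \<union> J)). Q1 \<omega> \<and> Q2 \<omega>} \<in> sets (P (I \<union> J))"
  proof -
    have "{\<omega>\<in>space (P (I \<union> J)). Q1 \<omega> \<and> Q2 \<omega>} = {\<omega>\<in>space (P (I \<union> J)). Q1 \<omega>} \<inter> {\<omega>\<in>space (P (I \<union> J)). Q2 \<omega>}"
      by auto
    then show ?thesis using A1 A2 by simp
  qed
  have "emeasure (P (I \<union> J)) {\<omega>\<in>space (P (I \<union> J)). Q1 \<omega> \<and> Q2 \<omega>}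
     = (\<integral>\<^sup>+x. emeasure (P J) ((\<lambda>y. merge I J (x, y)) -` {\<omega>\<in>space (P (I \<union> J)). Q1 \<omega> \<and> Q2 \<omega>} \<inter> space (P J)) \<partial>P I)"
    by (rule product_sigma_finite.emeasure_fold_integral[OF PS IJ fI fJ A])
  also have "\<dots> = (\<integral>\<^sup>+x. emeasure (P J) {\<omega>\<in>space (P J). Q2 \<omega>} * indicator {\<omega>\<in>space (P I). Q1 \<omega>} x \<partial>P I)"
  proof (rule nn_integral_cong)
    fix x assume x: "x \<in> space (P I)"
    have q1: "Q1 (merge I J (x, y)) = Q1 x" for y by (rule loc1) (auto simp: merge_def)
    have q2: "Q2 (merge I J (x, y)) = Q2 y" for y by (rule loc2) (use IJ in \<open>auto simp: merge_def\<close>)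
    have "(\<lambda>y. merge I J (x, y)) -` {\<omega>\<in>space (P (I \<union> J)). Q1 \<omega> \<and> Q2 \<omega>} \<inter> space (P J)
        = (if Q1 x then {\<omega>\<in>space (P J). Q2 \<omega>} else {})"
      using x by (auto simp: q1 q2 space_P)
    then show "emeasure (P J) ((\<lambda>y. merge I J (x, y)) -` {\<omega>\<in>space (P (I \<union> J)). Q1 \<omega> \<and> Q2 \<omega>} \<inter> space (P J))
       = emeasure (P J) {\<omega>\<in>space (P J). Q2 \<omega>} * indicator {\<omega>\<in>space (P I). Q1 \<omega>} x"
      using x by (simp add: indicator_def)
  qed
  also have "\<dots> = emeasure (P J) {\<omega>\<in>space (P J). Q2 \<omega>} * emeasure (P I) {\<omega>\<in>space (P I). Q1 \<omega>}"
    using S1 by (simp add: nn_integral_cmult_indicator)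
  finally show ?thesis by (simp add: mult.commute)
qed

definition F :: "real \<Rightarrow> ennreal" where "F y = emeasure M {..<y}"

definition dc :: "real set \<Rightarrow> bool" where "dc S \<longleftrightarrow> (\<forall>x y. y \<in> S \<longrightarrow> x < y \<longrightarrow> x \<in> S)"

lemma dc_UNIV: "dc UNIV" by (simp add: dc_def)
lemma dc_lt: "dc {..<y}" by (auto simp: dc_def)

lemma intF:
  assumes S: "S \<in> sets borel" "dc S"
  shows "of_nat (Suc m) * (\<integral>\<^sup>+y. indicator S y * F y ^ m \<partial>M) = emeasure M S ^ Suc m"
proof -
  define I where "I = {0..m}"
  have fI: "finite I" and cI: "card I = Suc m" and neI: "I \<noteq> {}" by (auto simp: I_def)
  have A: "{\<omega>\<in>space (P I). \<forall>i\<in>I. \<omega> i \<in> S} \<in> sets (P I)"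
    using fI S by measurable
  have "emeasure M S ^ Suc m = emeasure (P I) {\<omega>\<in>space (P I). \<forall>i\<in>I. \<omega> i \<in> S}"
    using box[OF fI S(1)] cI by simp
  also have "\<dots> = (\<Sum>a\<in>I. \<integral>\<^sup>+y. emeasure (P (I-{a}))
            {x\<in>space (P (I-{a})). x(a:=y) \<in> {\<omega>\<in>space (P I). \<forall>i\<in>I. \<omega> i \<in> S} \<and> (\<forall>b\<in>I-{a}. x b < y)} \<partial>M)"
    by (rule decomp[OF fI neI A])
  also have "\<dots> = (\<Sum>a\<in>I. \<integral>\<^sup>+y. indicator S y * F y ^ m \<partial>M)"
  proof (rule sum.cong[OF refl], rule nn_integral_cong)
    fix a y assume a: "a \<in> I"
    have "{x\<in>space (P (I-{a})). x(a:=y) \<in> {\<omega>\<in>space (P I). \<forall>i\<in>I. \<omega> i \<in> S} \<and> (\<forall>b\<in>I-{a}. x b < y)}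
       = (if y \<in> S then {x\<in>space (P (I-{a})). \<forall>b\<in>I-{a}. x b \<in> {..<y}} else {})"
      using a S(2) unfolding dc_def by (auto simp: space_P PiE_def extensional_def)
    moreover have "emeasure (P (I-{a})) {x\<in>space (P (I-{a})). \<forall>b\<in>I-{a}. x b \<in> {..<y}} = F y ^ m"
      using box[of "I-{a}" "{..<y}"] fI cI a by (simp add: F_def)
    ultimately show "emeasure (P (I-{a}))
            {x\<in>space (P (I-{a})). x(a:=y) \<in> {\<omega>\<in>space (P I). \<forall>i\<in>I. \<omega> i \<in> S} \<and> (\<forall>b\<in>I-{a}. x b < y)}
         = indicator S y * F y ^ m" by simp
  qed
  also have "\<dots> = of_nat (Suc m) * (\<integral>\<^sup>+y. indicator S y * F y ^ m \<partial>M)"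
    using cI by simp
  finally show ?thesis by simp
qed

lemma E_meas:
  assumes "S \<in> sets borel"
  shows "{\<omega>\<in>space (P (C l r)). E l r \<omega> \<and> (\<forall>i\<in>C l r. \<omega> i \<in> S)} \<in> sets (P (C l r))"
proof -
  have 1: "Measurable.pred (P (C l r)) (\<lambda>\<omega>. max (\<omega> (Inr (j,0))) (\<omega> (Inr (j,1))) \<le> max (\<omega> (Inl (j-1))) (\<omega> (Inl j)))"
    if "j \<in> {Suc l..r}" for j
  proof -
    have comp: "(\<lambda>\<omega>. \<omega> i) \<in> borel_measurable (P (C l r))" if "i \<in> C l r" for i
      using measurable_component_singleton[OF that, of "\<lambda>_. M"] measurable_cong_sets[OF refl sb] by blast
    have c: "Inr (j,0) \<in> C l r" "Inr (j,1) \<in> C l r" "Inl (j-1) \<in> C l r" "Inl j \<in> C l r"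
      using that by auto
    have "(\<lambda>\<omega>. max (\<omega> (Inr (j,0))) (\<omega> (Inr (j,1)))) \<in> borel_measurable (P (C l r))"
      by (intro borel_measurable_max) (use c in \<open>auto intro: comp\<close>)
    moreover have "(\<lambda>\<omega>. max (\<omega> (Inl (j-1))) (\<omega> (Inl j))) \<in> borel_measurable (P (C l r))"
      by (intro borel_measurable_max) (use c in \<open>auto intro: comp\<close>)
    ultimately show ?thesis unfolding pred_def by (rule borel_measurable_le)
  qed
  have 2: "Measurable.pred (P (C l r)) (E l r)"
    unfolding E_def by (intro pred_intros_finite) (use 1 in auto)
  have 3: "Measurable.pred (P (C l r)) (\<lambda>\<omega>. \<forall>i\<in>C l r. \<omega> i \<in> S)"
    by (intro pred_intros_finite) (use assms in auto)
  show ?thesis using 2 3 by measurable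
qed

definition G :: "nat \<Rightarrow> nat \<Rightarrow> real set \<Rightarrow> ennreal" where
  "G l r S = emeasure (P (C l r)) {\<omega>\<in>space (P (C l r)). E l r \<omega> \<and> (\<forall>i\<in>C l r. \<omega> i \<in> S)}"

lemma indep_meas:
  assumes "I \<subseteq> K" "J \<subseteq> K"
    and loc1: "\<And>\<omega> \<omega>'. (\<forall>i\<in>I. \<omega> i = \<omega>' i) \<Longrightarrow> Q1 \<omega> = Q1 \<omega>'"
    and loc2: "\<And>\<omega> \<omega>'. (\<forall>i\<in>J. \<omega> i = \<omega>' i) \<Longrightarrow> Q2 \<omega> = Q2 \<omega>'"
    and S1: "{\<omega>\<in>space (P I). Q1 \<omega>} \<in> sets (P I)"
    and S2: "{\<omega>\<in>space (P J). Q2 \<omega>} \<in> sets (P J)"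
  shows "{\<omega>\<in>space (P K). Q1 \<omega> \<and> Q2 \<omega>} \<in> sets (P K)"
proof -
  have r1: "Q1 \<omega> = Q1 (restrict \<omega> I)" for \<omega> by (rule loc1) simp
  have r2: "Q2 \<omega> = Q2 (restrict \<omega> J)" for \<omega> by (rule loc2) simp
  have m1: "(\<lambda>\<omega>. restrict \<omega> I) \<in> measurable (P K) (P I)"
    by (rule measurable_restrict_subset) (use assms in auto)
  have m2: "(\<lambda>\<omega>. restrict \<omega> J) \<in> measurable (P K) (P J)"
    by (rule measurable_restrict_subset) (use assms in auto)
  have A1: "{\<omega>\<in>space (P K). Q1 \<omega>} \<in> sets (P K)"
  proof -
    have "{\<omega>\<in>space (P K). Q1 \<omega>} = (\<lambda>\<omega>. restrict \<omega> I) -` {\<omega>\<in>space (P I). Q1 \<omega>} \<inter> space (P K)"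
      using measurable_space[OF m1] r1 by blast
    then show ?thesis using measurable_sets[OF m1 S1] by simp
  qed
  have A2: "{\<omega>\<in>space (P K). Q2 \<omega>} \<in> sets (P K)"
  proof -
    have "{\<omega>\<in>space (P K). Q2 \<omega>} = (\<lambda>\<omega>. restrict \<omega> J) -` {\<omega>\<in>space (P J). Q2 \<omega>} \<inter> space (P K)"
      using measurable_space[OF m2] r2 by blast
    then show ?thesis using measurable_sets[OF m2 S2] by simp
  qed
  have "{\<omega>\<in>space (P K). Q1 \<omega> \<and> Q2 \<omega>} = {\<omega>\<in>space (P K). Q1 \<omega>} \<inter> {\<omega>\<in>space (P K). Q2 \<omega>}"
    by auto
  then show ?thesis using A1 A2 by simp
qed

lemma box_meas: assumes "finite J" "A \<in> sets borel" shows "{\<omega>\<in>space (P J). \<forall>i\<in>J. \<omega> i \<in> A} \<in> sets (P J)"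
proof -
  have "Measurable.pred (P J) (\<lambda>\<omega>. \<omega> i \<in> A)" if "i \<in> J" for i
  proof -
    have "(\<lambda>\<omega>. \<omega> i) \<in> measurable (P J) M" using measurable_component_singleton[OF that] .
    then have "(\<lambda>\<omega>. \<omega> i) \<in> borel_measurable (P J)" using measurable_cong_sets[OF refl sb] by blast
    then show ?thesis using assms(2) by measurable
  qed
  then have "Measurable.pred (P J) (\<lambda>\<omega>. \<forall>i\<in>J. \<omega> i \<in> A)"
    by (intro pred_intros_finite assms(1))
  then show ?thesis by simp
qed

lemma box_local: "(\<forall>i\<in>J. \<omega> i = \<omega>' i) \<Longrightarrow> (\<forall>i\<in>J. \<omega> i \<in> A) = (\<forall>i\<in>J. \<omega>' i \<in> A)"
  by auto

lemma Q_local: "(\<forall>i\<in>C l r. \<omega> i = \<omega>' i) \<Longrightarrow> (E l r \<omega> \<and> (\<forall>i\<in>C l r. \<omega> i \<in> A)) = (E l r \<omega>' \<and> (\<forall>i\<in>C l r. \<omega>' i \<in> A))"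
  using E_local[of l r \<omega> \<omega>'] by auto

lemma G_box:
  assumes "finite J" "C l r \<inter> J = {}"
  shows "emeasure (P (C l r \<union> J)) {\<omega>\<in>space (P (C l r \<union> J)). (E l r \<omega> \<and> (\<forall>i\<in>C l r. \<omega> i \<in> {..<y})) \<and> (\<forall>i\<in>J. \<omega> i \<in> {..<y})}
     = G l r {..<y} * F y ^ card J"
proof -
  have "emeasure (P (C l r \<union> J)) {\<omega>\<in>space (P (C l r \<union> J)). (E l r \<omega> \<and> (\<forall>i\<in>C l r. \<omega> i \<in> {..<y})) \<and> (\<forall>i\<in>J. \<omega> i \<in> {..<y})}
     = G l r {..<y} * emeasure (P J) {\<omega>\<in>space (P J). \<forall>i\<in>J. \<omega> i \<in> {..<y}}"
    unfolding G_def
    apply (rule indep)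
    subgoal by simp
    subgoal by (rule assms)
    subgoal by (rule assms)
    subgoal by (rule Q_local)
    subgoal by (rule box_local)
    subgoal by (rule E_meas) simp
    subgoal by (rule box_meas) (use assms in auto)
    done
  then show ?thesis using box[of J "{..<y}"] assms by (simp add: F_def)
qed

abbreviation D where
  "D l r S a y \<equiv> {x\<in>space (P (C l r - {a})). x(a:=y) \<in> {\<omega>\<in>space (P (C l r)). E l r \<omega> \<and> (\<forall>i\<in>C l r. \<omega> i \<in> S)}
      \<and> (\<forall>b\<in>C l r-{a}. x b < y)}"

lemma upd_space: "x \<in> space (P (C l r - {a})) \<Longrightarrow> a \<in> C l r \<Longrightarrow> x(a:=y) \<in> space (P (C l r))"
  by (auto simp: space_P PiE_def extensional_def)

lemma upd_S:
  assumes "dc S" "a \<in> C l r" "\<forall>b\<in>C l r-{a}. x b < y"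
  shows "(\<forall>i\<in>C l r. (x(a:=y)) i \<in> S) \<longleftrightarrow> y \<in> S"
  using assms unfolding dc_def by (metis DiffI fun_upd_apply singletonD)

lemma Q2_meas:
  assumes "finite J" "C l r \<inter> J = {}"
  shows "{\<omega>\<in>space (P (C l r \<union> J)). (E l r \<omega> \<and> (\<forall>i\<in>C l r. \<omega> i \<in> {..<y})) \<and> (\<forall>i\<in>J. \<omega> i \<in> {..<y})} \<in> sets (P (C l r \<union> J))"
  apply (rule indep_meas[where I="C l r" and J=J])
  subgoal by simp
  subgoal by simp
  subgoal by (rule Q_local)
  subgoal by (rule box_local)
  subgoal by (rule E_meas) simp
  subgoal by (rule box_meas) (use assms in auto)
  done

lemma case_int:
  assumes lk: "l < k" "k < r" and S: "dc S"
  shows "emeasure (P (C l r - {Inl k})) (D l r S (Inl k) y)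
    = indicator S y * (G l (k-1) {..<y} * (G (Suc k) r {..<y} * F y ^ 4))"
proof -
  define Fk :: "(nat + nat \<times> nat) set" where "Fk = {Inr (k,0), Inr (k,1), Inr (Suc k,0), Inr (Suc k,1)}"
  define J where "J = C (Suc k) r \<union> Fk"
  have CE: "C l r - {Inl k} = C l (k-1) \<union> J" unfolding J_def Fk_def using C_int[OF lk] .
  have a: "Inl k \<in> C l r" using lk by simp
  define R where "R = {x\<in>space (P (C l (k-1) \<union> J)). (E l (k-1) x \<and> (\<forall>i\<in>C l (k-1). x i\<in>{..<y})) \<and>
      ((E (Suc k) r x \<and> (\<forall>i\<in>C (Suc k) r. x i \<in>{..<y})) \<and> (\<forall>i\<in>Fk. x i \<in> {..<y}))}"
  have DR: "D l r S (Inl k) y = (if y \<in> S then R else {})"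
  proof (rule set_eqI)
    fix x
    show "x \<in> D l r S (Inl k) y \<longleftrightarrow> x \<in> (if y \<in> S then R else {})"
    proof (cases "x\<in>space (P (C l r - {Inl k})) \<and> (\<forall>b\<in>C l r - {Inl k}. x b < y)")
      case True
      have sp: "x(Inl k:=y) \<in> space (P (C l r))" using True upd_space a by blast
      have Sb: "(\<forall>i\<in>C l r. (x(Inl k:=y)) i \<in> S) \<longleftrightarrow> y \<in> S" using upd_S[OF S a] True by blast
      have Ei: "E l r (x(Inl k := y)) \<longleftrightarrow> E l (k-1) x \<and> E (Suc k) r x"
        using E_interior[OF lk] True by blast
      have all: "(\<forall>b\<in>C l r - {Inl k}. x b<y) \<longleftrightarrow> (\<forall>i\<in>C l (k-1). x i\<in>{..<y}) \<and> (\<forall>i\<in>C (Suc k) r. x i\<in>{..<y}) \<and> (\<forall>i\<in>Fk. x i\<in>{..<y})"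
        unfolding CE J_def by auto
      show ?thesis using True sp Sb Ei all unfolding R_def CE by auto
    next
      case False
      then show ?thesis unfolding R_def CE J_def by auto
    qed
  qed
  show ?thesis
  proof (cases "y \<in> S")
    case False
    show ?thesis unfolding DR using False by simp
  next
    case True
    have fFk: "finite Fk" "card Fk = 4" unfolding Fk_def by auto
    have dJ: "C (Suc k) r \<inter> Fk = {}" unfolding Fk_def by auto
    have d1: "C l (k-1) \<inter> J = {}" unfolding J_def Fk_def using C_disj_int[OF lk] .
    have "emeasure (P (C l r - {Inl k})) R
      = G l (k-1) {..<y} * emeasure (P J) {x\<in>space (P J). (E (Suc k) r x \<and> (\<forall>i\<in>C (Suc k) r. x i \<in>{..<y})) \<and> (\<forall>i\<in>Fk. x i \<in> {..<y})}"
      unfolding R_def CE G_def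
      apply (rule indep)
      subgoal by simp
      subgoal unfolding J_def Fk_def by simp
      subgoal by (rule d1)
      subgoal by (rule Q_local)
      subgoal for \<omega> \<omega>' unfolding J_def using Q_local[of "Suc k" r \<omega> \<omega>' "{..<y}"] box_local[of Fk \<omega> \<omega>' "{..<y}"] by auto
      subgoal by (rule E_meas) simp
      subgoal unfolding J_def by (rule Q2_meas) (use fFk dJ in auto)
      done
    also have "\<dots> = G l (k-1) {..<y} * (G (Suc k) r {..<y} * F y ^ 4)"
      unfolding J_def using G_box[of Fk "Suc k" r y] fFk dJ by simp
    finally show ?thesis unfolding DR using True by simp
  qed
qed

lemma case_left:
  assumes lk: "l < r" and S: "dc S"
  shows "emeasure (P (C l r - {Inl l})) (D l r S (Inl l) y)
    = indicator S y * (G (Suc l) r {..<y} * F y ^ 2)"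
proof -
  define Fk :: "(nat + nat \<times> nat) set" where "Fk = {Inr (Suc l,0), Inr (Suc l,1)}"
  have CE: "C l r - {Inl l} = C (Suc l) r \<union> Fk" unfolding Fk_def using C_left[OF lk] .
  have a: "Inl l \<in> C l r" using lk by simp
  define R where "R = {x\<in>space (P (C (Suc l) r \<union> Fk)). (E (Suc l) r x \<and> (\<forall>i\<in>C (Suc l) r. x i \<in>{..<y})) \<and> (\<forall>i\<in>Fk. x i \<in> {..<y})}"
  have DR: "D l r S (Inl l) y = (if y \<in> S then R else {})"
  proof (rule set_eqI)
    fix x
    show "x \<in> D l r S (Inl l) y \<longleftrightarrow> x \<in> (if y \<in> S then R else {})"
    proof (cases "x\<in>space (P (C l r - {Inl l})) \<and> (\<forall>b\<in>C l r - {Inl l}. x b < y)")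
      case True
      have sp: "x(Inl l:=y) \<in> space (P (C l r))" using True upd_space a by blast
      have Sb: "(\<forall>i\<in>C l r. (x(Inl l:=y)) i \<in> S) \<longleftrightarrow> y \<in> S" using upd_S[OF S a] True by blast
      have Ei: "E l r (x(Inl l := y)) \<longleftrightarrow> E (Suc l) r x"
        using E_left[OF lk] True by blast
      have all: "(\<forall>b\<in>C l r - {Inl l}. x b<y) \<longleftrightarrow> (\<forall>i\<in>C (Suc l) r. x i\<in>{..<y}) \<and> (\<forall>i\<in>Fk. x i\<in>{..<y})"
        unfolding CE by auto
      show ?thesis using True sp Sb Ei all unfolding R_def CE by auto
    next
      case False
      then show ?thesis unfolding R_def CE by auto
    qed
  qed
  show ?thesis
  proof (cases "y \<in> S")
    case False
    show ?thesis unfolding DR using False by simp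
  next
    case True
    have fFk: "finite Fk" "card Fk = 2" unfolding Fk_def by auto
    have dJ: "C (Suc l) r \<inter> Fk = {}" unfolding Fk_def by auto
    have "emeasure (P (C l r - {Inl l})) R = G (Suc l) r {..<y} * F y ^ 2"
      unfolding R_def CE using G_box[of Fk "Suc l" r y] fFk dJ by simp
    then show ?thesis unfolding DR using True by simp
  qed
qed

lemma case_right:
  assumes lk: "l < r" and S: "dc S"
  shows "emeasure (P (C l r - {Inl r})) (D l r S (Inl r) y)
    = indicator S y * (G l (r-1) {..<y} * F y ^ 2)"
proof -
  define Fk :: "(nat + nat \<times> nat) set" where "Fk = {Inr (r,0), Inr (r,1)}"
  have CE: "C l r - {Inl r} = C l (r-1) \<union> Fk" unfolding Fk_def using C_right[OF lk] .
  have a: "Inl r \<in> C l r" using lk by simp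
  define R where "R = {x\<in>space (P (C l (r-1) \<union> Fk)). (E l (r-1) x \<and> (\<forall>i\<in>C l (r-1). x i \<in>{..<y})) \<and> (\<forall>i\<in>Fk. x i \<in> {..<y})}"
  have DR: "D l r S (Inl r) y = (if y \<in> S then R else {})"
  proof (rule set_eqI)
    fix x
    show "x \<in> D l r S (Inl r) y \<longleftrightarrow> x \<in> (if y \<in> S then R else {})"
    proof (cases "x\<in>space (P (C l r - {Inl r})) \<and> (\<forall>b\<in>C l r - {Inl r}. x b < y)")
      case True
      have sp: "x(Inl r:=y) \<in> space (P (C l r))" using True upd_space a by blast
      have Sb: "(\<forall>i\<in>C l r. (x(Inl r:=y)) i \<in> S) \<longleftrightarrow> y \<in> S" using upd_S[OF S a] True by blast
      have Ei: "E l r (x(Inl r := y)) \<longleftrightarrow> E l (r-1) x"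
        using E_right[OF lk] True by blast
      have all: "(\<forall>b\<in>C l r - {Inl r}. x b<y) \<longleftrightarrow> (\<forall>i\<in>C l (r-1). x i\<in>{..<y}) \<and> (\<forall>i\<in>Fk. x i\<in>{..<y})"
        unfolding CE by auto
      show ?thesis using True sp Sb Ei all unfolding R_def CE by auto
    next
      case False
      then show ?thesis unfolding R_def CE by auto
    qed
  qed
  show ?thesis
  proof (cases "y \<in> S")
    case False
    show ?thesis unfolding DR using False by simp
  next
    case True
    have fFk: "finite Fk" "card Fk = 2" unfolding Fk_def by auto
    have dJ: "C l (r-1) \<inter> Fk = {}" unfolding Fk_def by auto
    have "emeasure (P (C l r - {Inl r})) R = G l (r-1) {..<y} * F y ^ 2"
      unfolding R_def CE using G_box[of Fk l "r-1" y] fFk dJ by simp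
    then show ?thesis unfolding DR using True by simp
  qed
qed

lemma case_Inr:
  assumes j: "Suc l \<le> j" "j \<le> r" "i = 0 \<or> i = 1"
  shows "emeasure (P (C l r - {Inr (j,i)})) (D l r S (Inr (j,i)) y) = 0"
proof -
  have e: "D l r S (Inr (j,i)) y = {}"
    using E_Inr[OF j] by blast
  show ?thesis unfolding e by simp
qed

lemma F_real: "F y = ennreal (measure M {..<y})"
  by (simp add: F_def emeasure_eq_measure)

lemma F_meas: "F \<in> borel_measurable M"
proof -
  have "mono (\<lambda>y. measure M {..<y})"
    by (intro monoI finite_measure_mono) auto
  then have "(\<lambda>y. measure M {..<y}) \<in> borel_measurable borel" by (rule borel_measurable_mono)
  then have "(\<lambda>y. ennreal (measure M {..<y})) \<in> borel_measurable borel" by measurable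
  then have "(\<lambda>y. ennreal (measure M {..<y})) \<in> borel_measurable M"
    using measurable_cong_sets[OF sb refl] by blast
  then show ?thesis by (simp add: F_real[abs_def])
qed

definition Jf :: "nat \<Rightarrow> real set \<Rightarrow> ennreal" where
  "Jf m S = (\<integral>\<^sup>+y. indicator S y * F y ^ m \<partial>M)"

lemma Jf_cmult:
  assumes "S \<in> sets borel"
  shows "(\<integral>\<^sup>+y. c * (indicator S y * F y ^ m) \<partial>M) = c * Jf m S"
proof -
  have [measurable]: "S \<in> sets M" using assms sb by simp
  have "(\<lambda>y. indicator S y * F y ^ m) \<in> borel_measurable M"
    using F_meas by measurable
  then show ?thesis unfolding Jf_def by (rule nn_integral_cmult)
qed

lemma Jf_val:
  assumes "S \<in> sets borel" "dc S"
  shows "Jf m S = emeasure M S ^ Suc m * ennreal (1 / real (Suc m))"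
proof -
  have "of_nat (Suc m) * Jf m S = emeasure M S ^ Suc m"
    unfolding Jf_def by (rule intF[OF assms])
  then have "ennreal (1 / real (Suc m)) * (of_nat (Suc m) * Jf m S) = emeasure M S ^ Suc m * ennreal (1 / real (Suc m))"
    by (simp add: mult.commute)
  moreover have "ennreal (1 / real (Suc m)) * of_nat (Suc m) = 1"
    by (simp add: ennreal_of_nat_eq_real_of_nat ennreal_mult''[symmetric] del: of_nat_Suc)
  ultimately show ?thesis by (simp add: mult.assoc[symmetric])
qed

lemma G_decomp:
  assumes lr: "l < r" and S: "S \<in> sets borel" "dc S"
  shows "G l r S = (\<Sum>k\<in>{l..r}. \<integral>\<^sup>+y. emeasure (P (C l r - {Inl k})) (D l r S (Inl k) y) \<partial>M)"
proof -
  have ne: "C l r \<noteq> {}" using lr by (auto simp: C_def)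
  have "G l r S = (\<Sum>a\<in>C l r. \<integral>\<^sup>+y. emeasure (P (C l r - {a})) (D l r S a y) \<partial>M)"
    unfolding G_def by (rule decomp[OF finite_C ne E_meas[OF S(1)]])
  also have "\<dots> = (\<Sum>a\<in>Inl ` {l..r}. \<integral>\<^sup>+y. emeasure (P (C l r - {a})) (D l r S a y) \<partial>M)
      + (\<Sum>a\<in>Inr ` ({Suc l..r} \<times> {0,1}). \<integral>\<^sup>+y. emeasure (P (C l r - {a})) (D l r S a y) \<partial>M)"
    unfolding C_def by (rule sum.union_disjoint) auto
  also have "(\<Sum>a\<in>Inr ` ({Suc l..r} \<times> {0,1}). \<integral>\<^sup>+y. emeasure (P (C l r - {a})) (D l r S a y) \<partial>M) = 0"
  proof (rule sum.neutral, rule ballI)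
    fix a :: "nat + nat \<times> nat" assume "a \<in> Inr ` ({Suc l..r} \<times> {0::nat,1})"
    then obtain j i where a: "a = Inr (j,i)" "Suc l \<le> j" "j \<le> r" "i = 0 \<or> i = 1" by auto
    show "(\<integral>\<^sup>+y. emeasure (P (C l r - {a})) (D l r S a y) \<partial>M) = 0"
      unfolding a(1) using case_Inr[OF a(2-4)] by simp
  qed
  also have "(\<Sum>a\<in>Inl ` {l..r}. \<integral>\<^sup>+y. emeasure (P (C l r - {a})) (D l r S a y) \<partial>M)
     = (\<Sum>k\<in>{l..r}. \<integral>\<^sup>+y. emeasure (P (C l r - {Inl k})) (D l r S (Inl k) y) \<partial>M)"
    by (rule sum.reindex_cong[of Inl]) auto
  finally show ?thesis by simp
qed

lemma pN_nonneg: "0 \<le> pN M n" by (simp add: pN_def)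

definition Kc :: "nat \<Rightarrow> real" where
  "Kc n = 2 * pN M (n-1) + (\<Sum>j=2..n. pN M (j-2) * pN M (n-j))"

lemma step:
  assumes n: "0 < n" and S: "S \<in> sets borel" "dc S"
    and IH: "\<And>m l' y. m < n \<Longrightarrow> G l' (l'+m) {..<y} = ennreal (pN M m) * F y ^ (3*m+1)"
  shows "G l (l+n) S = ennreal (Kc n) * Jf (3*n) S"
proof -
  define r where "r = l + n"
  have lr: "l < r" using n r_def by simp
  define c where "c k = (if k = l \<or> k = l+n then pN M (n-1) else pN M (k-1-l) * pN M (l+n-Suc k))" for k
  have c0: "0 \<le> c k" for k unfolding c_def by (auto intro: pN_nonneg mult_nonneg_nonneg)
  have T: "(\<integral>\<^sup>+y. emeasure (P (C l r - {Inl k})) (D l r S (Inl k) y) \<partial>M) = ennreal (c k) * Jf (3*n) S"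
    if k: "k \<in> {l..r}" for k
  proof -
    consider "k = l" | "k = r" | "l < k \<and> k < r" using k lr by fastforce
    then show ?thesis
    proof cases
      case 1
      have g: "G (Suc l) r {..<y} = ennreal (pN M (n-1)) * F y ^ (3*(n-1)+1)" for y
        using IH[of "n-1" "Suc l" y] n unfolding r_def by simp
      have e: "3*(n-1)+1+2 = 3*n" using n by simp
      have "(\<integral>\<^sup>+y. emeasure (P (C l r - {Inl k})) (D l r S (Inl k) y) \<partial>M)
          = (\<integral>\<^sup>+y. ennreal (pN M (n-1)) * (indicator S y * F y ^ (3*n)) \<partial>M)"
      proof (rule nn_integral_cong)
        fix y
        have pw: "F y ^ (3*(n-1)+1) * F y ^ 2 = F y ^ (3*n)" unfolding e[symmetric] power_add by simp
        show "emeasure (P (C l r - {Inl k})) (D l r S (Inl k) y) = ennreal (pN M (n-1)) * (indicator S y * F y ^ (3*n))"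
          unfolding 1 case_left[OF lr S(2)] g by (subst pw[symmetric]) (simp only: ac_simps)
      qed
      also have "\<dots> = ennreal (c k) * Jf (3*n) S"
        unfolding Jf_cmult[OF S(1)] c_def using 1 by simp
      finally show ?thesis .
    next
      case 2
      have g: "G l (r-1) {..<y} = ennreal (pN M (n-1)) * F y ^ (3*(n-1)+1)" for y
        using IH[of "n-1" l y] n unfolding r_def by simp
      have e: "3*(n-1)+1+2 = 3*n" using n by simp
      have "(\<integral>\<^sup>+y. emeasure (P (C l r - {Inl k})) (D l r S (Inl k) y) \<partial>M)
          = (\<integral>\<^sup>+y. ennreal (pN M (n-1)) * (indicator S y * F y ^ (3*n)) \<partial>M)"
      proof (rule nn_integral_cong)
        fix y
        have pw: "F y ^ (3*(n-1)+1) * F y ^ 2 = F y ^ (3*n)" unfolding e[symmetric] power_add by simp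
        show "emeasure (P (C l r - {Inl k})) (D l r S (Inl k) y) = ennreal (pN M (n-1)) * (indicator S y * F y ^ (3*n))"
          unfolding 2 case_right[OF lr S(2)] g by (subst pw[symmetric]) (simp only: ac_simps)
      qed
      also have "\<dots> = ennreal (c k) * Jf (3*n) S"
        unfolding Jf_cmult[OF S(1)] c_def using 2 r_def by simp
      finally show ?thesis .
    next
      case 3
      then have lk: "l < k" "k < r" by auto
      define a where "a = k-1-l"
      define b where "b = r - Suc k"
      have g1: "G l (k-1) {..<y} = ennreal (pN M a) * F y ^ (3*a+1)" for y
        using IH[of a l y] lk unfolding a_def r_def by simp
      have g2: "G (Suc k) r {..<y} = ennreal (pN M b) * F y ^ (3*b+1)" for y
        using IH[of b "Suc k" y] lk unfolding b_def r_def by simp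
      have e: "(3*a+1) + ((3*b+1) + 4) = 3*n" using lk unfolding a_def b_def r_def by simp
      have "(\<integral>\<^sup>+y. emeasure (P (C l r - {Inl k})) (D l r S (Inl k) y) \<partial>M)
          = (\<integral>\<^sup>+y. ennreal (pN M a * pN M b) * (indicator S y * F y ^ (3*n)) \<partial>M)"
      proof (rule nn_integral_cong)
        fix y
        have pw: "F y ^ (3*a+1) * (F y ^ (3*b+1) * F y ^ 4) = F y ^ (3*n)" unfolding e[symmetric] power_add by simp
        show "emeasure (P (C l r - {Inl k})) (D l r S (Inl k) y) = ennreal (pN M a * pN M b) * (indicator S y * F y ^ (3*n))"
          unfolding case_int[OF lk S(2)] g1 g2 ennreal_mult'[OF pN_nonneg] by (subst pw[symmetric]) (simp only: ac_simps)
      qed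
      also have "\<dots> = ennreal (c k) * Jf (3*n) S"
        unfolding Jf_cmult[OF S(1)] c_def a_def b_def using lk r_def by simp
      finally show ?thesis .
    qed
  qed
  have "G l r S = (\<Sum>k\<in>{l..r}. ennreal (c k) * Jf (3*n) S)"
    unfolding G_decomp[OF lr S] by (rule sum.cong[OF refl]) (rule T)
  also have "\<dots> = ennreal (\<Sum>k\<in>{l..r}. c k) * Jf (3*n) S"
    by (simp add: sum_distrib_right[symmetric] c0)
  also have "(\<Sum>k\<in>{l..r}. c k) = Kc n"
    unfolding Kc_def c_def r_def by (rule sum_c[OF n])
  finally show ?thesis unfolding r_def .
qed

lemma idx_C: "idx n = C 0 n" by (simp add: idx_def C_def)

lemma PI_prob: "prob_space (P I)"
  by (rule prob_space_PiM) (simp add: ps)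

lemma pN_link:
  assumes "0 < n" shows "ennreal (pN M n) = G 0 n UNIV"
proof -
  have ev: "event M n = {\<omega>\<in>space (P (C 0 n)). E 0 n \<omega> \<and> (\<forall>i\<in>C 0 n. \<omega> i \<in> UNIV)}"
    unfolding event_def jointM_def idx_C E_def by auto
  interpret PI: prob_space "P (C 0 n)" by (rule PI_prob)
  show ?thesis
    using assms PI.emeasure_eq_measure
    unfolding pN_def G_def jointM_def idx_C ev by simp
qed

lemma G_base: "S \<in> sets borel \<Longrightarrow> G l l S = emeasure M S"
proof -
  assume S: "S \<in> sets borel"
  have c: "C l l = {Inl l}" by (auto simp: C_def)
  have "{\<omega>\<in>space (P (C l l)). E l l \<omega> \<and> (\<forall>i\<in>C l l. \<omega> i \<in> S)} = {\<omega>\<in>space (P (C l l)). \<forall>i\<in>C l l. \<omega> i \<in> S}"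
    by (auto simp: E_def)
  then show ?thesis unfolding G_def using box[OF finite_C S, of l l] c by simp
qed

lemma main_ind:
  "\<forall>l S. S \<in> sets borel \<longrightarrow> dc S \<longrightarrow> G l (l+n) S = ennreal (pN M n) * emeasure M S ^ (3*n+1)"
  "0 < n \<Longrightarrow> pN M n = Kc n / real (3*n+1)"
proof (induction n rule: less_induct)
  case (less n)
  have IH: "G l' (l'+m) {..<y} = ennreal (pN M m) * F y ^ (3*m+1)" if "m < n" for m l' y
    using less.IH(1)[OF that] dc_lt unfolding F_def by auto
  have rec: "pN M n = Kc n / real (3*n+1)" if n: "0 < n"
  proof -
    have "ennreal (pN M n) = G 0 (0+n) UNIV" using pN_link[OF n] by simp
    also have "\<dots> = ennreal (Kc n) * Jf (3*n) UNIV"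
      by (rule step[OF n _ dc_UNIV IH]) auto
    also have "Jf (3*n) UNIV = ennreal (1 / real (Suc (3*n)))"
      using Jf_val[OF _ dc_UNIV, of "3*n"] by (simp add: emeasure_space_1[simplified])
    also have "ennreal (Kc n) * ennreal (1 / real (Suc (3*n))) = ennreal (Kc n * (1 / real (Suc (3*n))))"
      by (rule ennreal_mult''[symmetric]) simp
    finally have e: "ennreal (pN M n) = ennreal (Kc n * (1 / real (Suc (3*n))))" .
    have "0 \<le> Kc n" unfolding Kc_def by (auto intro!: add_nonneg_nonneg sum_nonneg mult_nonneg_nonneg pN_nonneg)
    then have "pN M n = Kc n * (1 / real (Suc (3*n)))"
      using e pN_nonneg[of n] by (subst (asm) ennreal_inj) auto
    then show ?thesis by simp
  qed
  show "\<forall>l S. S \<in> sets borel \<longrightarrow> dc S \<longrightarrow> G l (l+n) S = ennreal (pN M n) * emeasure M S ^ (3*n+1)"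
  proof (intro allI impI)
    fix l S assume S: "S \<in> sets borel" "dc S"
    show "G l (l+n) S = ennreal (pN M n) * emeasure M S ^ (3*n+1)"
    proof (cases "n = 0")
      case True
      then show ?thesis using G_base[OF S(1)] by (simp add: pN_def)
    next
      case False
      then have n: "0 < n" by simp
      have "G l (l+n) S = ennreal (Kc n) * Jf (3*n) S" by (rule step[OF n S IH])
      also have "\<dots> = ennreal (Kc n) * (emeasure M S ^ (3*n+1) * ennreal (1 / real (Suc (3*n))))"
        using Jf_val[OF S] by simp
      also have "\<dots> = ennreal (Kc n) * ennreal (1 / real (Suc (3*n))) * emeasure M S ^ (3*n+1)"
        by (metis mult.assoc mult.commute)
      also have "ennreal (Kc n) * ennreal (1 / real (Suc (3*n))) = ennreal (Kc n * (1 / real (Suc (3*n))))"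
        by (rule ennreal_mult''[symmetric]) simp
      also have "Kc n * (1 / real (Suc (3*n))) = pN M n" using rec[OF n] by simp
      finally show ?thesis .
    qed
  qed
  show "0 < n \<Longrightarrow> pN M n = Kc n / real (3*n+1)" by (rule rec)
qed

end



context cmodel begin

lemma pN_le1: "pN M n \<le> 1"
proof (cases "n = 0")
  case False
  interpret PI: prob_space "P (idx n)" by (rule PI_prob)
  show ?thesis using False unfolding pN_def jointM_def by (simp add: PI.prob_le_1)
qed (simp add: pN_def)

definition A :: "complex fps" where "A = Abs_fps (\<lambda>n. complex_of_real (pN M n))"

lemma gf_eq: "gf M = eval_fps A"
  by (simp add: fun_eq_iff gf_def eval_fps_def A_def)

lemma rad_A: "1 \<le> fps_conv_radius A"
  unfolding fps_conv_radius_def A_def fps_nth_Abs_fps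
proof (rule conv_radius_geI_ex')
  fix r :: real assume r: "0 < r" "ereal r < 1"
  then have r1: "r < 1" by simp
  show "summable (\<lambda>n. complex_of_real (pN M n) * of_real r ^ n)"
  proof (rule summable_comparison_test[OF _ summable_geometric[of r]])
    show "\<exists>N. \<forall>n\<ge>N. norm (complex_of_real (pN M n) * complex_of_real r ^ n) \<le> r ^ n"
      using r pN_nonneg pN_le1 by (auto simp: norm_mult norm_power intro!: mult_left_le_one_le)
    show "norm r < 1" using r r1 by simp
  qed
qed

lemma recur: "0 < n \<Longrightarrow> pN M n = 1 / (3 * real n + 1) * (2 * pN M (n - 1) + (\<Sum>j=2..n. pN M (j - 2) * pN M (n - j)))"
  using main_ind(2)[of n] unfolding Kc_def by (simp add: field_simps)

lemma coeff_id: "(3 * real n + 1) * pN M n = (if n = 0 then 1 else 0) + (if n = 0 then 0 else 2 * pN M (n-1))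
   + (if n < 2 then 0 else (\<Sum>i=0..n-2. pN M i * pN M (n-2-i)))"
proof (cases "n = 0")
  case True then show ?thesis by (simp add: pN_def)
next
  case False
  have "(\<Sum>j=2..n. pN M (j - 2) * pN M (n - j)) = (if n < 2 then 0 else (\<Sum>i=0..n-2. pN M i * pN M (n-2-i)))"
  proof (cases "n < 2")
    case True then show ?thesis by simp
  next
    case False
    have "(\<Sum>j=2..n. pN M (j - 2) * pN M (n - j)) = (\<Sum>i=0..n-2. pN M i * pN M (n-2-i))"
    proof (rule sum.reindex_bij_witness[where i="\<lambda>i. i+2" and j="\<lambda>j. j-2"])
      fix a assume a: "a \<in> {2..n}"
      then have "n - 2 - (a - 2) = n - a" by auto
      then show "pN M (a - 2) * pN M (n - 2 - (a - 2)) = pN M (a - 2) * pN M (n - a)" by simp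
    qed (use False in auto)
    then show ?thesis using False by simp
  qed
  then show ?thesis using recur[of n] False by (simp add: field_simps)
qed

lemma fps_id: "A + fps_const 3 * (fps_X * fps_deriv A) = 1 + fps_const 2 * (fps_X * A) + fps_X ^ 2 * (A * A)"
proof (rule fps_ext)
  fix n
  have "fps_nth (A + fps_const 3 * (fps_X * fps_deriv A)) n = of_real ((3 * real n + 1) * pN M n)"
    by (cases n) (auto simp: A_def fps_X_mult_nth algebra_simps)
  also have "\<dots> = fps_nth (1 + fps_const 2 * (fps_X * A) + fps_X ^ 2 * (A * A)) n"
    unfolding coeff_id
    by (simp only: fps_add_nth fps_mult_left_const_nth fps_X_mult_nth fps_X_power_mult_nth fps_mult_nth[of A A])
       (auto simp: A_def)
  finally show "fps_nth (A + fps_const 3 * (fps_X * fps_deriv A)) n = fps_nth (1 + fps_const 2 * (fps_X * A) + fps_X ^ 2 * (A * A)) n" .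
qed

lemma rad_mult: "ereal (norm z) < fps_conv_radius f \<Longrightarrow> ereal (norm z) < fps_conv_radius g \<Longrightarrow> ereal (norm z) < fps_conv_radius (f * g)"
  for f g :: "complex fps"
  using fps_conv_radius_mult[of f g] by (simp add: min_def split: if_splits)

lemma rad_add: "ereal (norm z) < fps_conv_radius f \<Longrightarrow> ereal (norm z) < fps_conv_radius g \<Longrightarrow> ereal (norm z) < fps_conv_radius (f + g)"
  for f g :: "complex fps"
  using fps_conv_radius_add[of f g] by (simp add: min_def split: if_splits)

lemma ode:
  assumes z: "norm z < 1"
  shows "gf M z + 3 * z * deriv (gf M) z = 1 + 2 * z * gf M z + z\<^sup>2 * (gf M z)\<^sup>2"
proof -
  have rA: "ereal (norm z) < fps_conv_radius A" using z rad_A by (meson ereal_less(3) less_le_trans)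
  have rD: "ereal (norm z) < fps_conv_radius (fps_deriv A)"
    using rA fps_conv_radius_deriv[of A] by (meson less_le_trans)
  have rX: "ereal (norm z) < fps_conv_radius (fps_X :: complex fps)" by simp
  have rX2: "ereal (norm z) < fps_conv_radius (fps_X ^ 2 :: complex fps)" by simp
  have rc: "ereal (norm z) < fps_conv_radius (fps_const c :: complex fps)" for c by simp
  have r1: "ereal (norm z) < fps_conv_radius (1 :: complex fps)" by simp
  have "eval_fps (A + fps_const 3 * (fps_X * fps_deriv A)) z = eval_fps A z + 3 * (z * eval_fps (fps_deriv A) z)"
    using rA rD rX rc by (simp add: eval_fps_add eval_fps_mult rad_mult rad_add)
  moreover have "eval_fps (1 + fps_const 2 * (fps_X * A) + fps_X ^ 2 * (A * A)) z
      = 1 + 2 * (z * eval_fps A z) + z ^ 2 * (eval_fps A z * eval_fps A z)"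
    using rA rX rX2 rc r1 by (simp add: eval_fps_add eval_fps_mult rad_mult rad_add)
  moreover have "eval_fps (fps_deriv A) z = deriv (gf M) z"
    unfolding gf_eq using eval_fps_deriv[OF rA] .
  ultimately show ?thesis unfolding fps_id gf_eq by (simp add: power2_eq_square algebra_simps)
qed

end

theorem mainTheorem8:
  fixes M :: "real measure"
  assumes "prob_space M"
    and "sets M = sets borel"
    and "\<And>x. measure M {x} = 0"
  shows "(\<forall>N\<ge>1. pN M N = 1 / (3 * real N + 1) *
            (2 * pN M (N - 1) + (\<Sum>j=2..N. pN M (j - 2) * pN M (N - j))))
       \<and> (\<exists>r>0. (\<forall>z\<in>ball 0 r. summable (\<lambda>N. complex_of_real (pN M N) * z ^ N))
               \<and> gf M holomorphic_on ball 0 r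
               \<and> (\<forall>z\<in>ball 0 r. gf M z + 3 * z * deriv (gf M) z
                                 = 1 + 2 * z * gf M z + z\<^sup>2 * (gf M z)\<^sup>2))"
proof -
  interpret cmodel M by (rule cmodel.intro) (rule assms)+
  have p1: "\<forall>N\<ge>1. pN M N = 1 / (3 * real N + 1) *
            (2 * pN M (N - 1) + (\<Sum>j=2..N. pN M (j - 2) * pN M (N - j)))"
    using recur by auto
  have s: "\<forall>z\<in>ball 0 1. summable (\<lambda>N. complex_of_real (pN M N) * z ^ N)"
  proof
    fix z :: complex assume "z \<in> ball 0 1"
    then have "ereal (norm z) < fps_conv_radius A" using rad_A by (meson ereal_less(3) less_le_trans mem_ball_0)
    then show "summable (\<lambda>N. complex_of_real (pN M N) * z ^ N)"
      using summable_fps[of z A] by (simp add: A_def)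
  qed
  have sub: "ball (0::complex) 1 \<subseteq> eball 0 (fps_conv_radius A)"
    using ball_eball_mono[of 1 "fps_conv_radius A" "0::complex"] rad_A by (metis one_ereal_def)
  have h: "gf M holomorphic_on ball 0 1"
    unfolding gf_eq by (rule holomorphic_on_eval_fps[OF sub])
  have o: "\<forall>z\<in>ball 0 1. gf M z + 3 * z * deriv (gf M) z = 1 + 2 * z * gf M z + z\<^sup>2 * (gf M z)\<^sup>2"
    using ode by simp
  show ?thesis using p1 s h o by (intro conjI exI[of _ 1]) auto
qed

end
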